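(* Let $n\ge3$, $\emptyset\ne S\subseteq\{1,\dots,n-1\}$, $\mathfrak p:=\sum_{i\in S}\mathfrak p_i'$. Then $E_\infty(\mathbb S_{CI})\subseteq E_\infty(\mathbb S_{n-1},\mathfrak p)$ for every $I\in\mathcal J(\mathfrak p)$ with $2\le|I|\le n-1$, and $U_I(K)\subseteq E_\infty(\mathbb S_{n-1},\mathfrak p)$ for every $I\in\mathcal J(\mathfrak p)$ with $3\le|I|\le n-1$. In particular $\widetilde{\mathcal E}_{n,s}(\mathfrak p)\subseteq E_\infty(\mathbb S_{n-1},\mathfrak p)$ for $s=3,\dots,n-1$.
   Context: $K$ is a field, $\mathbb N=\{0,1,\dots\}$. $\mathbb S_n$: $K$-algebra generated by $x_1,\dots,x_n,y_1,\dots,y_n$ with relations $y_ix_i=1$, $[x_i,y_j]=[x_i,x_j]=[y_i,y_j]=0$ ($i\ne j$). $E_{st}(i):=x_i^sy_i^t-x_i^{s+1}y_i^{t+1}$, $e_i:=E_{00}(i)$, $e_I:=\prod_{i\in I}e_i$, $E_{\alpha\beta}(I):=\prod_{i\in I}E_{\alpha_i\beta_i}(i)$. $\mathfrak p_n$ = ideal of $\mathbb S_n$ generated by $e_n$. $\mathbb S_{n-1}$ = subalgebra generated by $x_k,y_k$, $k<n$; $\mathfrak p_i'$ = ideal of $\mathbb S_{n-1}$ generated by $e_i$. $\mathrm{GL}_\infty(\mathbb S_{n-1})$ is identified with the group of units of $\mathbb S_n$ in $1+\mathfrak p_n$ via $(a_{kl})\mapsto 1+\sum(a_{kl}-\delta_{kl})E_{kl}(n)$.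 $E_\infty(\mathbb S_{n-1},\mathfrak p)$ is the relative elementary group, the normal subgroup of $E_\infty(\mathbb S_{n-1})$ generated by the elements $1+aE_{kl}(n)$ with $a\in\mathfrak p$, $k\ne l$. $\mathcal J(\mathfrak p):=\{J\subseteq\{1,\dots,n\}: n\in J,\ J\cap S\ne\emptyset\}$. $\mu_I(\lambda):=\lambda e_I+1-e_I$, $U_I(K):=\{\mu_I(\lambda):\lambda\in K^*\}$; $\mathbb S_{CI}$ = subalgebra generated by $x_k,y_k$, $k\notin I$; $E_\infty(\mathbb S_{CI})$ = subgroup of $\mathbb S_n^*$ generated by $1+aE_{\alpha\beta}(I)$, $a\in\mathbb S_{CI}$, $\alpha\ne\beta\in\mathbb N^I$. $\widetilde{\mathcal E}_{n,s}(\mathfrak p)$ = set of products, in a fixed order over all $I\in\mathcal J(\mathfrak p)$ with $|I|=s$, of elements of $U_I(K)E_\infty(\mathbb S_{CI})$. *)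

theory Defs
  imports Main
begin

text \<open>Concrete model of the Jacobson algebra S_n: its faithful representation on functions
  of multi-indices (nat => nat) => K.  Generator x_i shifts up in coordinate i, y_i shifts down;
  y_i x_i = 1.  Elements of algebras are operators; product = composition, 1 = id.\<close>

type_synonym 'k vec = "(nat \<Rightarrow> nat) \<Rightarrow> 'k"
type_synonym 'k op = "'k vec \<Rightarrow> 'k vec"

definition Xop :: "nat \<Rightarrow> 'k::field op" where
  "Xop i v = (\<lambda>m. if 0 < m i then v (m(i := m i - 1)) else 0)"

definition Yop :: "nat \<Rightarrow> 'k::field op" where
  "Yop i v = (\<lambda>m. v (m(i := m i + 1)))"

definition opadd :: "'k::field op \<Rightarrow> 'k op \<Rightarrow> 'k op" where
  "opadd A B = (\<lambda>v m. A v m + B v m)"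

definition opsub :: "'k::field op \<Rightarrow> 'k op \<Rightarrow> 'k op" where
  "opsub A B = (\<lambda>v m. A v m - B v m)"

definition opsmult :: "'k::field \<Rightarrow> 'k op \<Rightarrow> 'k op" where
  "opsmult c A = (\<lambda>v m. c * A v m)"

definition opzero :: "'k::field op" where
  "opzero = (\<lambda>v m. 0)"

inductive_set alg_gen :: "'k::field op set \<Rightarrow> 'k op set" for G where
  gen: "g \<in> G \<Longrightarrow> g \<in> alg_gen G"
| one: "id \<in> alg_gen G"
| zero: "opzero \<in> alg_gen G"
| add: "a \<in> alg_gen G \<Longrightarrow> b \<in> alg_gen G \<Longrightarrow> opadd a b \<in> alg_gen G"
| smult: "a \<in> alg_gen G \<Longrightarrow> opsmult c a \<in> alg_gen G"
| mult: "a \<in> alg_gen G \<Longrightarrow> b \<in> alg_gen G \<Longrightarrow> a \<circ> b \<in> alg_gen G"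

definition SS :: "nat set \<Rightarrow> 'k::field op set" where
  "SS A = alg_gen ({Xop i | i. i \<in> A} \<union> {Yop i | i. i \<in> A})"

definition Sn :: "nat \<Rightarrow> 'k::field op set" where
  "Sn n = SS {1..n}"

definition S_C :: "nat \<Rightarrow> nat set \<Rightarrow> 'k::field op set" where
  "S_C n I = SS ({1..n} - I)"

definition Est :: "nat \<Rightarrow> nat \<Rightarrow> nat \<Rightarrow> 'k::field op" where
  "Est s t i = opsub ((Xop i ^^ s) \<circ> (Yop i ^^ t)) ((Xop i ^^ (s+1)) \<circ> (Yop i ^^ (t+1)))"

definition ee :: "nat \<Rightarrow> 'k::field op" where
  "ee i = Est 0 0 i"

text \<open>Products over a finite index set I (factors commute; taken in increasing order).\<close>
definition eI :: "nat set \<Rightarrow> 'k::field op" where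
  "eI I = foldr (\<circ>) (map ee (sorted_list_of_set I)) id"

definition EabI :: "(nat \<Rightarrow> nat) \<Rightarrow> (nat \<Rightarrow> nat) \<Rightarrow> nat set \<Rightarrow> 'k::field op" where
  "EabI \<alpha> \<beta> I = foldr (\<circ>) (map (\<lambda>i. Est (\<alpha> i) (\<beta> i) i) (sorted_list_of_set I)) id"

inductive_set ideal_gen :: "'k::field op set \<Rightarrow> 'k op \<Rightarrow> 'k op set" for R a where
  zero: "opzero \<in> ideal_gen R a"
| gen: "r \<in> R \<Longrightarrow> s \<in> R \<Longrightarrow> r \<circ> a \<circ> s \<in> ideal_gen R a"
| add: "u \<in> ideal_gen R a \<Longrightarrow> w \<in> ideal_gen R a \<Longrightarrow> opadd u w \<in> ideal_gen R a"

inductive_set add_span :: "'k::field op set \<Rightarrow> 'k op set" for A where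
  zero: "opzero \<in> add_span A"
| gen: "a \<in> A \<Longrightarrow> a \<in> add_span A"
| add: "u \<in> add_span A \<Longrightarrow> w \<in> add_span A \<Longrightarrow> opadd u w \<in> add_span A"

definition p'_ideal :: "nat \<Rightarrow> nat \<Rightarrow> 'k::field op set" where
  "p'_ideal n i = ideal_gen (Sn (n - 1)) (ee i)"

definition pS :: "nat \<Rightarrow> nat set \<Rightarrow> 'k::field op set" where
  "pS n S = add_span (\<Union>i\<in>S. p'_ideal n i)"

inductive_set grp_gen :: "'k::field op set \<Rightarrow> 'k op set" for G where
  one: "id \<in> grp_gen G"
| gen: "g \<in> G \<Longrightarrow> g \<in> grp_gen G"
| inv: "g \<in> G \<Longrightarrow> inv g \<in> grp_gen G"
| mult: "a \<in> grp_gen G \<Longrightarrow> b \<in> grp_gen G \<Longrightarrow> a \<circ> b \<in> grp_gen G"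

text \<open>E_infty(S_{n-1}) inside S_n^*: generated by 1 + a E_{kl}(n), a in S_{n-1}, k ~= l.\<close>
definition Einf :: "nat \<Rightarrow> 'k::field op set" where
  "Einf n = grp_gen {opadd id (a \<circ> Est k l n) | a k l. a \<in> Sn (n - 1) \<and> k \<noteq> l}"

definition Einf_rel :: "nat \<Rightarrow> 'k::field op set \<Rightarrow> 'k op set" where
  "Einf_rel n p = grp_gen {h \<circ> opadd id (a \<circ> Est k l n) \<circ> inv h | h a k l.
      h \<in> Einf n \<and> a \<in> p \<and> k \<noteq> l}"

definition Einf_C :: "nat \<Rightarrow> nat set \<Rightarrow> 'k::field op set" where
  "Einf_C n I = grp_gen {opadd id (a \<circ> EabI \<alpha> \<beta> I) | a \<alpha> \<beta>.
      a \<in> S_C n I \<and> (\<exists>i\<in>I. \<alpha> i \<noteq> \<beta> i)}"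

definition muI :: "nat set \<Rightarrow> 'k::field \<Rightarrow> 'k op" where
  "muI I c = opadd (opsmult c (eI I)) (opsub id (eI I))"

definition U_I :: "nat set \<Rightarrow> 'k::field op set" where
  "U_I I = {muI I c | c. c \<noteq> 0}"

definition JJ :: "nat \<Rightarrow> nat set \<Rightarrow> nat set set" where
  "JJ n S = {J. J \<subseteq> {1..n} \<and> n \<in> J \<and> J \<inter> S \<noteq> {}}"

definition Etilde :: "nat \<Rightarrow> nat set \<Rightarrow> nat \<Rightarrow> 'k::field op set" where
  "Etilde n S s = {foldr (\<circ>) (map g L) id | L g.
      distinct L \<and> set L = {I \<in> JJ n S. card I = s} \<and>
      (\<forall>I\<in>set L. \<exists>u\<in>U_I I. \<exists>h\<in>Einf_C n I. g I = u \<circ> h)}"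

end

theory Submission
  imports Defs
begin


lemma Xpow: "(Xop i ^^ s) v = (\<lambda>m. if s \<le> m i then v (m(i := m i - s)) else 0)"
proof (induction s arbitrary: v)
  case 0 then show ?case by (auto simp: fun_eq_iff)
next
  case (Suc s) show ?case
    unfolding funpow_Suc_right o_apply Suc.IH by (auto simp: fun_eq_iff Xop_def)
qed

lemma Ypow: "(Yop i ^^ t) v = (\<lambda>m. v (m(i := m i + t)))"
proof (induction t arbitrary: v)
  case 0 then show ?case by (auto simp: fun_eq_iff)
next
  case (Suc s) show ?case 
    unfolding funpow_Suc_right o_apply Suc.IH by (auto simp: fun_eq_iff Yop_def intro!: arg_cong[where f=v])
qed

lemma Est_cf: "Est s t i v = (\<lambda>m. if m i = s then v (m(i := t)) else 0)"
  apply (auto simp: fun_eq_iff Est_def opsub_def Xpow Ypow simp del: funpow.simps)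
  apply (rule arg_cong[where f=v]) apply (auto simp: fun_eq_iff)
  done

definition ovr :: "(nat \<Rightarrow> nat) \<Rightarrow> (nat \<Rightarrow> nat) \<Rightarrow> nat set \<Rightarrow> (nat \<Rightarrow> nat)" where
  "ovr m \<beta> J = (\<lambda>k. if k \<in> J then \<beta> k else m k)"

lemma foldr_Est: "distinct L \<Longrightarrow>
  foldr (\<circ>) (map (\<lambda>i. Est (\<alpha> i) (\<beta> i) i) L) id v
   = (\<lambda>m. if \<forall>k\<in>set L. m k = \<alpha> k then v (ovr m \<beta> (set L)) else (0::'k::field))"
proof (induction L arbitrary: v)
  case Nil then show ?case by (auto simp: fun_eq_iff ovr_def)
next
  case (Cons a L)
  have e: "ovr (m(a := \<beta> a)) \<beta> (set L) = ovr m \<beta> (set (a#L))" for m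
    by (auto simp: ovr_def fun_eq_iff)
  show ?case using Cons by (auto simp: fun_eq_iff Est_cf e)
qed

lemma EabI_cf: "finite I \<Longrightarrow> (EabI \<alpha> \<beta> I :: 'k::field op) v
   = (\<lambda>m. if \<forall>k\<in>I. m k = \<alpha> k then v (ovr m \<beta> I) else 0)"
  proof -
  assume f: "finite I"
  have e: "set (sorted_list_of_set I) = I" using f by simp
  show ?thesis unfolding EabI_def foldr_Est[OF distinct_sorted_list_of_set] e ..
qed

lemma eI_EabI: "eI I = EabI (\<lambda>_. 0) (\<lambda>_. 0) I"
  unfolding eI_def EabI_def ee_def by simp

lemma eI_cf: "finite I \<Longrightarrow> (eI I :: 'k::field op) v
   = (\<lambda>m. if \<forall>k\<in>I. m k = 0 then v m else 0)"
proof -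
  assume f: "finite I"
  show ?thesis by (auto simp: eI_EabI EabI_cf[OF f] fun_eq_iff intro!: arg_cong[where f=v] simp: ovr_def)
qed

lemma EabI_insert: "finite J \<Longrightarrow> i \<notin> J \<Longrightarrow>
  (EabI \<alpha> \<beta> (insert i J) :: 'k::field op) = EabI \<alpha> \<beta> J \<circ> Est (\<alpha> i) (\<beta> i) i"
proof -
  assume f: "finite J" and i: "i \<notin> J"
  have o: "ovr m \<beta> J i = m i" for m using i by (simp add: ovr_def)
  have o2: "(ovr m \<beta> J)(i := \<beta> i) = ovr m \<beta> (insert i J)" for m
    by (auto simp: ovr_def fun_eq_iff)
  show ?thesis using f i
    by (auto simp: fun_eq_iff EabI_cf Est_cf o o2)
qed

lemma EabI_EabI: "finite J \<Longrightarrow> (EabI \<alpha> \<beta> J :: 'k::field op) \<circ> EabI \<gamma> \<delta> J =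
   (if \<forall>k\<in>J. \<beta> k = \<gamma> k then EabI \<alpha> \<delta> J else opzero)"
proof -
  assume f: "finite J"
  have o: "ovr (ovr m \<beta> J) \<delta> J = ovr m \<delta> J" for m by (auto simp: ovr_def)
  have o2: "k \<in> J \<Longrightarrow> ovr m \<beta> J k = \<beta> k" for m k by (auto simp: ovr_def)
  show ?thesis using f
    by (auto simp: fun_eq_iff EabI_cf opzero_def o o2)
qed

definition lin :: "'k::field op \<Rightarrow> bool" where
  "lin A \<longleftrightarrow> (\<forall>v w. A (\<lambda>m. v m + w m) = (\<lambda>m. A v m + A w m)) \<and>
            (\<forall>c v. A (\<lambda>m. c * v m) = (\<lambda>m. c * A v m))"

lemma lin_add: "lin A \<Longrightarrow> A (\<lambda>m. v m + w m) = (\<lambda>m. A v m + A w m)"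
  by (simp add: lin_def)
lemma lin_smult: "lin A \<Longrightarrow> A (\<lambda>m. c * v m) = (\<lambda>m. c * A v m)"
  by (simp add: lin_def)
lemma lin_zero: "lin A \<Longrightarrow> A (\<lambda>m. 0) = (\<lambda>m. 0)"
  using lin_smult[of A 0 "\<lambda>m. 0"] by simp
lemma lin_neg: "lin A \<Longrightarrow> A (\<lambda>m. - v m) = (\<lambda>m. - A v m)"
  using lin_smult[of A "-1" v] by simp

lemma lin_sub: "lin A \<Longrightarrow> A (\<lambda>m. v m - w m) = (\<lambda>m. A v m - A w m)"
proof -
  assume l: "lin A"
  have "A (\<lambda>m. v m - w m) = A (\<lambda>m. v m + (\<lambda>m. - w m) m)" by simp
  also have "\<dots> = (\<lambda>m. A v m + A (\<lambda>m. - w m) m)" by (rule lin_add[OF l])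
  finally show ?thesis by (simp add: lin_neg[OF l])
qed

lemma lin_X: "lin (Xop i)" by (auto simp: lin_def Xop_def fun_eq_iff)
lemma lin_Y: "lin (Yop i)" by (auto simp: lin_def Yop_def fun_eq_iff)
lemma lin_Est: "lin (Est s t i)" by (auto simp: lin_def Est_cf fun_eq_iff)
lemma lin_id: "lin id" by (auto simp: lin_def)
lemma lin_comp: "lin A \<Longrightarrow> lin B \<Longrightarrow> lin (A \<circ> B)" by (simp add: lin_def)
lemma lin_alg: "a \<in> alg_gen G \<Longrightarrow> (\<forall>g\<in>G. lin g) \<Longrightarrow> lin a"
  by (induction rule: alg_gen.induct)
     (auto simp: lin_def opadd_def opsmult_def opzero_def algebra_simps)
lemma lin_SS: "a \<in> SS T \<Longrightarrow> lin a"
  unfolding SS_def by (erule lin_alg) (auto simp: lin_X lin_Y)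

lemma alg_comm: "a \<in> alg_gen G \<Longrightarrow> (\<forall>g\<in>G. g \<circ> B = B \<circ> g) \<Longrightarrow> lin B \<Longrightarrow> a \<circ> B = B \<circ> a"
proof (induction rule: alg_gen.induct)
  case (zero) then show ?case by (auto simp: fun_eq_iff opzero_def lin_zero)
next
  case (add a b) then show ?case
    by (simp add: fun_eq_iff opadd_def lin_add)
next
  case (smult a c) then show ?case
    by (simp add: fun_eq_iff opsmult_def lin_smult)
next
  case (mult a b)
  from mult have "\<And>x. a (B x) = B (a x)" "\<And>x. b (B x) = B (b x)"
    by (metis comp_apply)+
  then show ?case by (simp add: comp_def)
qed auto

lemma X_Est_comm: "i \<noteq> j \<Longrightarrow> Xop i \<circ> Est s t j = Est s t j \<circ> Xop i"
  by (simp add: fun_eq_iff Xop_def Est_cf fun_upd_twist)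
lemma Y_Est_comm: "i \<noteq> j \<Longrightarrow> Yop i \<circ> Est s t j = Est s t j \<circ> Yop i"
  by (simp add: fun_eq_iff Yop_def Est_cf fun_upd_twist)

lemma SS_Est_comm: "a \<in> SS T \<Longrightarrow> j \<notin> T \<Longrightarrow> a \<circ> Est s t j = Est s t j \<circ> a"
  unfolding SS_def by (erule alg_comm) (auto simp: lin_Est intro!: X_Est_comm Y_Est_comm)

lemma foldr_comm: "(\<forall>g\<in>set L. a \<circ> g = g \<circ> a) \<Longrightarrow> a \<circ> foldr (\<circ>) L id = foldr (\<circ>) L id \<circ> a"
proof (induction L)
  case (Cons g L)
  let ?F = "foldr (\<circ>) L id"
  have 1: "a \<circ> g = g \<circ> a" using Cons.prems by (meson list.set_intros(1))
  have 2: "a \<circ> ?F = ?F \<circ> a" using Cons.prems Cons.IH by (meson list.set_intros(2))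
  have "a \<circ> (g \<circ> ?F) = (a \<circ> g) \<circ> ?F" by (rule comp_assoc[symmetric])
  also have "\<dots> = (g \<circ> a) \<circ> ?F" by (simp only: 1)
  also have "\<dots> = g \<circ> (a \<circ> ?F)" by (rule comp_assoc)
  also have "\<dots> = g \<circ> (?F \<circ> a)" by (simp only: 2)
  also have "\<dots> = (g \<circ> ?F) \<circ> a" by (rule comp_assoc[symmetric])
  finally have c: "a \<circ> (g \<circ> ?F) = (g \<circ> ?F) \<circ> a" .
  have e: "foldr (\<circ>) (g # L) id = g \<circ> ?F" by simp
  show ?case unfolding e by (rule c)
qed simp

lemma SS_EabI_comm: "a \<in> SS T \<Longrightarrow> finite J \<Longrightarrow> J \<inter> T = {} \<Longrightarrow> a \<circ> EabI \<alpha> \<beta> J = EabI \<alpha> \<beta> J \<circ> a"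
  unfolding EabI_def by (rule foldr_comm) (auto intro!: SS_Est_comm)

lemma unip_inv:
  assumes "lin X" "X \<circ> X = opzero"
  shows "opadd id X \<circ> opadd id (opsmult (-1) X) = id"
        "opadd id (opsmult (-1) X) \<circ> opadd id X = id"
proof -
  have xx: "X (X v) = (\<lambda>m. 0)" for v using assms(2) by (metis comp_apply opzero_def)
  show "opadd id X \<circ> opadd id (opsmult (-1) X) = id"
    by (rule ext) (simp add: opadd_def opsmult_def lin_add[OF assms(1)] lin_smult[OF assms(1)] lin_neg[OF assms(1)] lin_sub[OF assms(1)] xx)
  show "opadd id (opsmult (-1) X) \<circ> opadd id X = id"
    by (rule ext) (simp add: opadd_def opsmult_def lin_add[OF assms(1)] lin_smult[OF assms(1)] lin_neg[OF assms(1)] lin_sub[OF assms(1)] xx)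
qed

lemma comm4:
  assumes "lin X" "lin Y" "X \<circ> X = opzero" "Y \<circ> Y = opzero" "Y \<circ> X = opzero"
  shows "opadd id X \<circ> opadd id Y \<circ> opadd id (opsmult (-1) X) \<circ> opadd id (opsmult (-1) Y)
         = opadd id (X \<circ> Y)"
proof -
  have xx: "X (X v) = (\<lambda>m. 0)" for v using assms(3) by (metis comp_apply opzero_def)
  have yy: "Y (Y v) = (\<lambda>m. 0)" for v using assms(4) by (metis comp_apply opzero_def)
  have yx: "Y (X v) = (\<lambda>m. 0)" for v using assms(5) by (metis comp_apply opzero_def)
  show ?thesis
    by (rule ext) (simp add: opadd_def opsmult_def lin_add[OF assms(1)] lin_smult[OF assms(1)] lin_neg[OF assms(1)]
       lin_add[OF assms(2)] lin_smult[OF assms(2)] lin_neg[OF assms(2)] lin_sub[OF assms(1)] lin_sub[OF assms(2)] lin_zero[OF assms(1)] lin_zero[OF assms(2)] xx yy yx)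
qed

lemma alg_gen_mono: "a \<in> alg_gen G \<Longrightarrow> G \<subseteq> G' \<Longrightarrow> a \<in> alg_gen G'"
  by (induction rule: alg_gen.induct) (auto intro: alg_gen.intros)

lemma SS_mono: "a \<in> SS T \<Longrightarrow> T \<subseteq> T' \<Longrightarrow> a \<in> SS T'"
  unfolding SS_def by (erule alg_gen_mono) auto

lemma X_SS: "i \<in> T \<Longrightarrow> Xop i \<in> SS T" unfolding SS_def by (auto intro: alg_gen.gen)
lemma Y_SS: "i \<in> T \<Longrightarrow> Yop i \<in> SS T" unfolding SS_def by (auto intro: alg_gen.gen)
lemma id_SS: "id \<in> SS T" unfolding SS_def by (rule alg_gen.one)
lemma comp_SS: "a \<in> SS T \<Longrightarrow> b \<in> SS T \<Longrightarrow> a \<circ> b \<in> SS T" unfolding SS_def by (rule alg_gen.mult)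
lemma smult_SS: "a \<in> SS T \<Longrightarrow> opsmult c a \<in> SS T" unfolding SS_def by (rule alg_gen.smult)
lemma add_SS: "a \<in> SS T \<Longrightarrow> b \<in> SS T \<Longrightarrow> opadd a b \<in> SS T" unfolding SS_def by (rule alg_gen.add)

lemma pow_SS: "f \<in> SS T \<Longrightarrow> f ^^ s \<in> SS T"
  by (induction s) (auto intro: id_SS comp_SS)

lemma opsub_eq: "opsub a b = opadd a (opsmult (-1) b)"
  by (auto simp: fun_eq_iff opsub_def opadd_def opsmult_def)

lemma Est_SS: "i \<in> T \<Longrightarrow> Est s t i \<in> SS T"
  unfolding Est_def opsub_eq
  by (intro add_SS smult_SS comp_SS pow_SS X_SS Y_SS)

lemma ee_SS: "i \<in> T \<Longrightarrow> ee i \<in> SS T" unfolding ee_def by (rule Est_SS)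

lemma foldr_SS: "\<forall>g\<in>set L. g \<in> SS T \<Longrightarrow> foldr (\<circ>) L id \<in> SS T"
  by (induction L) (auto intro: id_SS comp_SS)

lemma EabI_SS: "finite J \<Longrightarrow> J \<subseteq> T \<Longrightarrow> EabI \<alpha> \<beta> J \<in> SS T"
  unfolding EabI_def by (rule foldr_SS) (auto intro: Est_SS)

lemma Est_factor: "Est s t i = (Xop i ^^ s) \<circ> ee i \<circ> (Yop i ^^ t)"
  by (rule ext, rule ext) (auto simp: ee_def Est_cf Xpow Ypow simp del: funpow.simps intro!: arg_cong[where f=v])

lemma opsmult_comp: "opsmult c (A \<circ> B) = opsmult c A \<circ> B"
  by (rule ext) (simp add: opsmult_def)

lemma pS_gen: "i \<in> S \<Longrightarrow> r \<in> Sn (n-1) \<Longrightarrow> s \<in> Sn (n-1) \<Longrightarrow> r \<circ> ee i \<circ> s \<in> pS n S"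
  unfolding pS_def p'_ideal_def
  by (rule add_span.gen) (auto intro: ideal_gen.gen)

lemma pS_EabI:
  assumes "finite J" "i \<in> J" "i \<in> S" "J \<subseteq> {1..n-1}" "a \<in> Sn (n-1)" "b \<in> Sn (n-1)"
  shows "opsmult c (a \<circ> EabI \<alpha> \<beta> J \<circ> b) \<in> pS n S"
proof -
  have J: "J = insert i (J - {i})" using assms by auto
  have h: "EabI \<alpha> \<beta> J = EabI \<alpha> \<beta> (J - {i}) \<circ> Est (\<alpha> i) (\<beta> i) i"
    using EabI_insert[of "J - {i}" i \<alpha> \<beta>] J assms(1) by auto
  have e: "opsmult c (a \<circ> EabI \<alpha> \<beta> J \<circ> b) =
     opsmult c (a \<circ> EabI \<alpha> \<beta> (J - {i}) \<circ> (Xop i ^^ \<alpha> i)) \<circ> ee i \<circ> ((Yop i ^^ \<beta> i) \<circ> b)"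
    by (subst h) (simp add: Est_factor opsmult_comp comp_assoc)
  have iT: "i \<in> {1..n-1}" using assms by auto
  show ?thesis unfolding e
    by (rule pS_gen[OF assms(3)]) (use assms iT in \<open>auto simp: Sn_def intro!: smult_SS comp_SS EabI_SS pow_SS X_SS Y_SS\<close>)
qed

lemma Est_sq: "k \<noteq> l \<Longrightarrow> Est k l j \<circ> Est k l j = opzero"
  by (rule ext, rule ext) (simp add: Est_cf opzero_def)

lemma sq_zero:
  assumes "lin a" "a \<circ> E = E \<circ> a" "E \<circ> E = opzero"
  shows "(a \<circ> E) \<circ> (a \<circ> E) = opzero"
proof -
  have c: "a (E x) = E (a x)" for x using assms(2) by (metis comp_apply)
  have ee: "E (E y) = (\<lambda>m. 0)" for y using assms(3) by (metis comp_apply opzero_def)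
  show ?thesis by (rule ext) (simp add: c ee opzero_def lin_zero[OF assms(1)])
qed

lemma lin_Sn: "a \<in> Sn m \<Longrightarrow> lin a" unfolding Sn_def by (rule lin_SS)

lemma Egen_inv:
  assumes "a \<in> Sn (n-1)" "k \<noteq> l" "0 < n"
  shows "opadd id (a \<circ> Est k l n) \<circ> opadd id (opsmult (-1) a \<circ> Est k l n) = id"
        "opadd id (opsmult (-1) a \<circ> Est k l n) \<circ> opadd id (a \<circ> Est k l n) = id"
proof -
  have c: "a \<circ> Est k l n = Est k l n \<circ> a"
    using assms SS_Est_comm[of a "{1..n-1}" n] by (auto simp: Sn_def)
  have l: "lin (a \<circ> Est k l n)" by (rule lin_comp[OF lin_Sn[OF assms(1)] lin_Est])
  have z: "(a \<circ> Est k l n) \<circ> (a \<circ> Est k l n) = opzero"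
    by (rule sq_zero[OF lin_Sn[OF assms(1)] c Est_sq[OF assms(2)]])
  show "opadd id (a \<circ> Est k l n) \<circ> opadd id (opsmult (-1) a \<circ> Est k l n) = id"
       "opadd id (opsmult (-1) a \<circ> Est k l n) \<circ> opadd id (a \<circ> Est k l n) = id"
    using unip_inv[OF l z] by (simp_all add: opsmult_comp)
qed

lemma Egen_in: "a \<in> Sn (n-1) \<Longrightarrow> k \<noteq> l \<Longrightarrow> opadd id (a \<circ> Est k l n) \<in> Einf n"
  unfolding Einf_def by (rule grp_gen.gen) blast

lemma Egen_bij: "a \<in> Sn (n-1) \<Longrightarrow> k \<noteq> l \<Longrightarrow> 0 < n \<Longrightarrow> bij (opadd id (a \<circ> Est k l n))"
  using Egen_inv by (metis o_bij)

lemma Egen_invE: "a \<in> Sn (n-1) \<Longrightarrow> k \<noteq> l \<Longrightarrow> 0 < n \<Longrightarrow>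
   inv (opadd id (a \<circ> Est k l n)) = opadd id (opsmult (-1) a \<circ> Est k l n)"
  using Egen_inv by (metis inv_unique_comp)

lemma grp_gen_bij: "g \<in> grp_gen G \<Longrightarrow> (\<forall>x\<in>G. bij x) \<Longrightarrow> bij g"
  by (induction rule: grp_gen.induct) (auto intro: bij_comp bij_imp_bij_inv)

lemma Einf_bij: "g \<in> Einf n \<Longrightarrow> 0 < n \<Longrightarrow> bij g"
  unfolding Einf_def by (erule grp_gen_bij) (auto intro: Egen_bij)

lemma Einf_comp: "a \<in> Einf n \<Longrightarrow> b \<in> Einf n \<Longrightarrow> a \<circ> b \<in> Einf n"
  unfolding Einf_def by (rule grp_gen.mult)

lemma grp_gen_inv: "g \<in> grp_gen G \<Longrightarrow> (\<forall>x\<in>G. bij x) \<Longrightarrow> inv g \<in> grp_gen G"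
proof (induction rule: grp_gen.induct)
  case one then show ?case by (metis inv_id grp_gen.one)
next
  case (gen g) then show ?case by (simp add: grp_gen.inv)
next
  case (inv g) then show ?case by (simp add: inv_inv_eq grp_gen.gen)
next
  case (mult a b)
  then have "bij a" "bij b" by (auto intro: grp_gen_bij)
  then show ?case using mult by (metis o_inv_distrib grp_gen.mult)
qed

lemma Einf_inv: "a \<in> Einf n \<Longrightarrow> 0 < n \<Longrightarrow> inv a \<in> Einf n"
  unfolding Einf_def by (erule grp_gen_inv) (auto intro: Egen_bij)

definition Rgen :: "nat \<Rightarrow> 'k::field op set \<Rightarrow> 'k op set" where
  "Rgen n p = {h \<circ> opadd id (a \<circ> Est k l n) \<circ> inv h | h a k l. h \<in> Einf n \<and> a \<in> p \<and> k \<noteq> l}"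

lemma Einf_rel_Rgen: "Einf_rel n p = grp_gen (Rgen n p)"
  unfolding Einf_rel_def Rgen_def ..

lemma rel_gen: "h \<in> Einf n \<Longrightarrow> a \<in> p \<Longrightarrow> k \<noteq> l \<Longrightarrow>
   h \<circ> opadd id (a \<circ> Est k l n) \<circ> inv h \<in> Einf_rel n p"
  unfolding Einf_rel_def by (rule grp_gen.gen) blast

lemma Einf_id: "id \<in> Einf n" unfolding Einf_def by (rule grp_gen.one)

lemma rel_gen0: "a \<in> p \<Longrightarrow> k \<noteq> l \<Longrightarrow> opadd id (a \<circ> Est k l n) \<in> Einf_rel n p"
  using rel_gen[OF Einf_id] by fastforce

lemma rel_comp: "a \<in> Einf_rel n p \<Longrightarrow> b \<in> Einf_rel n p \<Longrightarrow> a \<circ> b \<in> Einf_rel n p"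
  unfolding Einf_rel_def by (rule grp_gen.mult)

lemma rel_id: "id \<in> Einf_rel n p"
  unfolding Einf_rel_def by (rule grp_gen.one)

lemma Rgen_bij: "x \<in> Rgen n p \<Longrightarrow> p \<subseteq> Sn (n-1) \<Longrightarrow> 0 < n \<Longrightarrow> bij x"
proof -
  assume x: "x \<in> Rgen n p" and p: "p \<subseteq> Sn (n-1)" and n: "0 < n"
  then obtain h a k l where g: "x = h \<circ> opadd id (a \<circ> Est k l n) \<circ> inv h"
      and h: "h \<in> Einf n" "a \<in> p" "k \<noteq> l" unfolding Rgen_def by blast
  have "bij h" using h n by (rule_tac Einf_bij) auto
  moreover have "bij (opadd id (a \<circ> Est k l n))" using h p n by (intro Egen_bij) auto
  ultimately show ?thesis unfolding g by (intro bij_comp bij_imp_bij_inv)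
qed

lemma rel_conj:
  assumes "g \<in> Einf_rel n p" "a \<in> Einf n" "p \<subseteq> Sn (n-1)" "0 < n"
  shows "a \<circ> g \<circ> inv a \<in> Einf_rel n p"
  using assms(1) unfolding Einf_rel_Rgen
proof (induction rule: grp_gen.induct)
  case one
  have "bij a" using assms by (auto intro: Einf_bij)
  then have "a \<circ> inv a = id" using surj_iff bij_is_surj by blast
  then show ?case by (metis comp_id grp_gen.one)
next
  case (gen g)
  then obtain h b k l where g: "g = h \<circ> opadd id (b \<circ> Est k l n) \<circ> inv h"
      and h: "h \<in> Einf n" "b \<in> p" "k \<noteq> l" unfolding Rgen_def by blast
  have ba: "bij a" "bij h" using assms h by (auto intro: Einf_bij)
  have "a \<circ> g \<circ> inv a = (a \<circ> h) \<circ> opadd id (b \<circ> Est k l n) \<circ> inv (a \<circ> h)"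
    using ba by (simp add: g o_inv_distrib comp_assoc)
  moreover have "a \<circ> h \<in> Einf n" using assms h by (auto intro: Einf_comp)
  ultimately have "a \<circ> g \<circ> inv a \<in> Rgen n p" using h unfolding Rgen_def by blast
  then show ?case by (rule grp_gen.gen)
next
  case (inv g)
  have ba: "bij a" "bij g" using assms Rgen_bij[OF inv assms(3,4)] by (auto intro: Einf_bij)
  have "a \<circ> inv g \<circ> inv a = inv (a \<circ> g \<circ> inv a)"
    using ba by (simp add: o_inv_distrib bij_imp_bij_inv inv_inv_eq bij_comp comp_assoc)
  moreover have "a \<circ> g \<circ> inv a \<in> Rgen n p"
  proof -
    obtain h b k l where g: "g = h \<circ> opadd id (b \<circ> Est k l n) \<circ> inv h"
      and h: "h \<in> Einf n" "b \<in> p" "k \<noteq> l" using inv unfolding Rgen_def by blast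
    have bh: "bij h" using assms h by (auto intro: Einf_bij)
    have "a \<circ> g \<circ> inv a = (a \<circ> h) \<circ> opadd id (b \<circ> Est k l n) \<circ> inv (a \<circ> h)"
      using ba bh by (simp add: g o_inv_distrib comp_assoc)
    moreover have "a \<circ> h \<in> Einf n" using assms h by (auto intro: Einf_comp)
    ultimately show ?thesis using h unfolding Rgen_def by blast
  qed
  ultimately show ?case by (metis grp_gen.inv)
next
  case (mult g1 g2)
  have ba: "bij a" using assms by (auto intro: Einf_bij)
  have "a \<circ> (g1 \<circ> g2) \<circ> inv a = (a \<circ> g1 \<circ> inv a) \<circ> (a \<circ> g2 \<circ> inv a)"
  proof -
    have c: "inv a \<circ> (a \<circ> X) = X" for X
      using ba by (metis bij_is_inj comp_assoc id_comp inv_o_cancel)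
    show ?thesis by (simp add: comp_assoc c)
  qed
  then show ?case using mult by (metis grp_gen.mult)
qed

lemma Est_Est: "Est s t j \<circ> Est u v j = (if t = u then Est s v j else opzero)"
  by (rule ext, rule ext) (auto simp: Est_cf opzero_def)

lemma pS_sub: "S \<subseteq> {1..n-1} \<Longrightarrow> pS n S \<subseteq> Sn (n-1)"
proof
  fix x assume S: "S \<subseteq> {1..n-1}" and x: "x \<in> pS n S"
  have idl: "y \<in> Sn (n-1)" if "y \<in> ideal_gen (Sn (n-1)) (ee i)" "i \<in> S" for y i
    using that(1)
  proof (induction rule: ideal_gen.induct)
    case zero then show ?case unfolding Sn_def SS_def by (rule alg_gen.zero)
  next
    case (gen r s) then show ?case using that(2) S
      unfolding Sn_def by (intro comp_SS ee_SS) auto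
  next
    case (add u w) then show ?case unfolding Sn_def by (intro add_SS) auto
  qed
  from x show "x \<in> Sn (n-1)" unfolding pS_def
  proof (induction rule: add_span.induct)
    case zero then show ?case unfolding Sn_def SS_def by (rule alg_gen.zero)
  next
    case (gen a) then show ?case using idl unfolding p'_ideal_def by blast
  next
    case (add u w) then show ?case unfolding Sn_def by (intro add_SS) auto
  qed
qed

lemma opsmult_one: "opsmult 1 A = A" by (simp add: opsmult_def)

lemma part1_gen:
  fixes a :: "'k::field op"
  assumes n: "0 < n" and S: "S \<subseteq> {1..n-1}" and I: "I \<subseteq> {1..n}" "n \<in> I"
    and i0: "i0 \<in> I" "i0 \<in> S" and a: "a \<in> S_C n I" and ab: "\<exists>i\<in>I. \<alpha> i \<noteq> \<beta> i"
  shows "opadd id (a \<circ> EabI \<alpha> \<beta> I) \<in> Einf_rel n (pS n S)"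
proof -
  let ?I' = "I - {n}"
  have fI: "finite I" using I finite_subset by blast
  have fI': "finite ?I'" using fI by simp
  have I'sub: "?I' \<subseteq> {1..n-1}" using I by auto
  have i0I': "i0 \<in> ?I'" using i0 S n by auto
  have aS: "a \<in> SS ({1..n} - I)" using a by (simp add: S_C_def)
  have aSn: "a \<in> Sn (n-1)" unfolding Sn_def
  proof (rule SS_mono[OF aS], rule subsetI)
    fix x assume "x \<in> {1..n} - I"
    then have "x \<noteq> n" "1 \<le> x" "x \<le> n" using I by auto
    then show "x \<in> {1..n-1}" by auto
  qed
  have la: "lin a" by (rule lin_SS[OF aS])
  have split: "EabI \<alpha> \<beta> I = EabI \<alpha> \<beta> ?I' \<circ> Est (\<alpha> n) (\<beta> n) n"
    using EabI_insert[OF fI', of n \<alpha> \<beta>] I by (simp add: insert_absorb)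
  let ?c = "a \<circ> EabI \<alpha> \<beta> ?I'"
  have cp: "opsmult \<mu> ?c \<in> pS n S" for \<mu>
    using pS_EabI[OF fI' i0I' i0(2) I'sub aSn id_SS[of "{1..n-1}", folded Sn_def], of \<mu> \<alpha> \<beta>]
    by simp
  have cp1: "?c \<in> pS n S" using cp[of 1] by (simp add: opsmult_one)
  have cSn: "?c \<in> Sn (n-1)" using pS_sub[OF S] cp1 by blast
  have gsplit: "a \<circ> EabI \<alpha> \<beta> I = ?c \<circ> Est (\<alpha> n) (\<beta> n) n" by (simp add: split comp_assoc)
  show ?thesis
  proof (cases "\<alpha> n = \<beta> n")
    case False
    show ?thesis unfolding gsplit by (rule rel_gen0[OF cp1 False])
  next
    case True
    define t where "t = \<alpha> n"
    define u where "u = Suc t"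
    have tu: "t \<noteq> u" "u \<noteq> t" by (auto simp: u_def)
    let ?q = "EabI \<beta> \<beta> ?I'"
    have qSn: "?q \<in> Sn (n-1)" unfolding Sn_def by (rule EabI_SS[OF fI' I'sub])
    let ?X = "?c \<circ> Est t u n"
    let ?Y = "?q \<circ> Est u t n"
    have lc: "lin ?c" by (rule lin_Sn[OF cSn])
    have lq: "lin ?q" by (rule lin_Sn[OF qSn])
    have nT: "n \<notin> {1..n-1}" using n by auto
    have cc: "?c \<circ> Est k l n = Est k l n \<circ> ?c" for k l
      using SS_Est_comm[OF cSn[unfolded Sn_def] nT] .
    have qc: "?q \<circ> Est k l n = Est k l n \<circ> ?q" for k l
      using SS_Est_comm[OF qSn[unfolded Sn_def] nT] .
    have lX: "lin ?X" by (rule lin_comp[OF lc lin_Est])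
    have lY: "lin ?Y" by (rule lin_comp[OF lq lin_Est])
    have XX: "?X \<circ> ?X = opzero" by (rule sq_zero[OF lc cc Est_sq[OF tu(1)]])
    have YY: "?Y \<circ> ?Y = opzero" by (rule sq_zero[OF lq qc Est_sq[OF tu(2)]])
    have ab': "\<exists>k\<in>?I'. \<beta> k \<noteq> \<alpha> k" using ab True by (metis DiffI singletonD)
    have aq: "a \<circ> ?q = ?q \<circ> a" by (rule SS_EabI_comm[OF aS fI']) auto
    have nb: "\<not> (\<forall>k\<in>?I'. \<beta> k = \<alpha> k)" using ab' by blast
    have qE: "?q \<circ> EabI \<alpha> \<beta> ?I' = opzero" using EabI_EabI[OF fI', of \<beta> \<beta> \<alpha> \<beta>] nb by (simp only: nb if_False)
    have cq: "EabI \<alpha> \<beta> ?I' \<circ> ?q = EabI \<alpha> \<beta> ?I'" using EabI_EabI[OF fI', of \<alpha> \<beta> \<beta> \<beta>] by auto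
    have YX: "?Y \<circ> ?X = opzero"
    proof -
      have "?Y \<circ> ?X = ?q \<circ> (Est u t n \<circ> ?c) \<circ> Est t u n" by (simp add: comp_assoc)
      also have "\<dots> = ?q \<circ> (?c \<circ> Est u t n) \<circ> Est t u n" by (simp add: cc)
      also have "\<dots> = (?q \<circ> a) \<circ> EabI \<alpha> \<beta> ?I' \<circ> Est u t n \<circ> Est t u n" by (simp add: comp_assoc)
      also have "\<dots> = (a \<circ> ?q) \<circ> EabI \<alpha> \<beta> ?I' \<circ> Est u t n \<circ> Est t u n" by (simp only: aq)
      also have "\<dots> = a \<circ> (?q \<circ> EabI \<alpha> \<beta> ?I') \<circ> Est u t n \<circ> Est t u n" by (simp only: comp_assoc)
      also have "\<dots> = opzero" unfolding qE
        by (rule ext) (simp add: opzero_def lin_zero[OF la])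
      finally show ?thesis .
    qed
    have XY: "?X \<circ> ?Y = a \<circ> EabI \<alpha> \<beta> I"
    proof -
      have "?X \<circ> ?Y = ?c \<circ> (Est t u n \<circ> ?q) \<circ> Est u t n" by (simp add: comp_assoc)
      also have "\<dots> = ?c \<circ> (?q \<circ> Est t u n) \<circ> Est u t n" by (simp add: qc)
      also have "\<dots> = a \<circ> (EabI \<alpha> \<beta> ?I' \<circ> ?q) \<circ> (Est t u n \<circ> Est u t n)" by (simp add: comp_assoc)
      also have "\<dots> = a \<circ> EabI \<alpha> \<beta> ?I' \<circ> Est t t n" by (simp only: cq Est_Est if_True simp_thms)
      also have "\<dots> = a \<circ> EabI \<alpha> \<beta> I" using True by (simp add: gsplit t_def comp_assoc)
      finally show ?thesis .
    qed
    have main: "opadd id ?X \<circ> opadd id ?Y \<circ> opadd id (opsmult (-1) ?X) \<circ> opadd id (opsmult (-1) ?Y)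
         = opadd id (a \<circ> EabI \<alpha> \<beta> I)"
      using comm4[OF lX lY XX YY YX] XY by simp
    have B: "opadd id ?Y \<in> Einf n" by (rule Egen_in[OF qSn tu(2)])
    have Binv: "inv (opadd id ?Y) = opadd id (opsmult (-1) ?Y)"
      using Egen_invE[OF qSn tu(2) n] by (simp add: opsmult_comp)
    have A: "opadd id ?X \<in> Einf_rel n (pS n S)" by (rule rel_gen0[OF cp1 tu(1)])
    have A': "opadd id ?Y \<circ> opadd id (opsmult (-1) ?X) \<circ> inv (opadd id ?Y) \<in> Einf_rel n (pS n S)"
      using rel_gen[OF B cp[of "-1"] tu(1)] by (simp add: opsmult_comp)
    have "opadd id (a \<circ> EabI \<alpha> \<beta> I) = opadd id ?X \<circ> (opadd id ?Y \<circ> opadd id (opsmult (-1) ?X) \<circ> inv (opadd id ?Y))"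
      unfolding main[symmetric] Binv by (simp add: comp_assoc)
    then show ?thesis using rel_comp[OF A A'] by simp
  qed
qed

lemma part1:
  assumes n: "0 < n" and S: "S \<subseteq> {1..n-1}" and I: "I \<subseteq> {1..n}" "n \<in> I"
    and i0: "i0 \<in> I" "i0 \<in> S"
  shows "(Einf_C n I :: 'k::field op set) \<subseteq> Einf_rel n (pS n S)"
proof
  fix g :: "'k op" assume "g \<in> Einf_C n I"
  then show "g \<in> Einf_rel n (pS n S)" unfolding Einf_C_def
  proof (induction rule: grp_gen.induct)
    case one then show ?case by (rule rel_id)
  next
    case (gen g)
    then show ?case using part1_gen[OF n S I i0] by blast
  next
    case (inv g)
    then obtain a \<alpha> \<beta> where g: "g = opadd id (a \<circ> EabI \<alpha> \<beta> I)" and a: "a \<in> S_C n I"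
      and ab: "\<exists>i\<in>I. \<alpha> i \<noteq> \<beta> i" by blast
    have fI: "finite I" using I finite_subset by blast
    have aS: "a \<in> SS ({1..n} - I)" using a by (simp add: S_C_def)
    have la: "lin a" by (rule lin_SS[OF aS])
    have cm: "a \<circ> EabI \<alpha> \<beta> I = EabI \<alpha> \<beta> I \<circ> a" by (rule SS_EabI_comm[OF aS fI]) auto
    have nb: "\<not> (\<forall>k\<in>I. \<beta> k = \<alpha> k)" using ab by metis
    have EE: "EabI \<alpha> \<beta> I \<circ> EabI \<alpha> \<beta> I = opzero"
      using EabI_EabI[OF fI, of \<alpha> \<beta> \<alpha> \<beta>] nb by (simp only: nb if_False)
    have lX: "lin (a \<circ> EabI \<alpha> \<beta> I)" by (rule lin_comp[OF la]) (simp add: lin_def EabI_cf[OF fI] fun_eq_iff)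
    have XX: "(a \<circ> EabI \<alpha> \<beta> I) \<circ> (a \<circ> EabI \<alpha> \<beta> I) = opzero" by (rule sq_zero[OF la cm EE])
    have ig: "inv g = opadd id (opsmult (-1) a \<circ> EabI \<alpha> \<beta> I)"
      unfolding g using unip_inv[OF lX XX] by (simp add: opsmult_comp inv_unique_comp)
    have "opsmult (-1) a \<in> S_C n I" using a by (simp add: S_C_def smult_SS)
    then show ?case unfolding ig by (rule part1_gen[OF n S I i0 _ ab])
  next
    case (mult a b) then show ?case by (intro rel_comp) auto
  qed
qed



definition dm :: "nat set \<Rightarrow> nat \<Rightarrow> 'k::field \<Rightarrow> (nat \<Rightarrow> nat) \<Rightarrow> 'k" where
  "dm F n c m = (if (\<forall>k\<in>F. m k = 0) \<and> m n = 0 then c else 1)"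

definition Dop :: "nat set \<Rightarrow> nat \<Rightarrow> 'k::field \<Rightarrow> 'k op" where
  "Dop F n c = (\<lambda>v m. dm F n c m * v m)"

definition el :: "'k::field op \<Rightarrow> nat \<Rightarrow> nat \<Rightarrow> nat \<Rightarrow> 'k op" where
  "el r k l n = opadd id (r \<circ> Est k l n)"

lemma dm_upd_j: "j \<notin> F \<Longrightarrow> j \<noteq> n \<Longrightarrow> dm F n c (m(j := x)) = dm F n c m"
  unfolding dm_def by (metis fun_upd_other)

lemma dm_upd_n: "n \<notin> F \<Longrightarrow> dm F n c (m(n := Suc x)) = 1"
  unfolding dm_def by simp

lemma dm_upd_n0: "n \<notin> F \<Longrightarrow> dm F n c (m(n := 0)) = (if (\<forall>k\<in>F. m k = 0) then c else 1)"
  unfolding dm_def by (auto simp: fun_upd_other)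


lemma conj01X:
  fixes c :: "'k::field"
  assumes "c \<noteq> 0" "j \<notin> F" "n \<notin> F" "j \<noteq> n" "finite F"
  shows "Dop F n c \<circ> el (Xop j) 0 1 n \<circ> Dop F n (inverse c) \<circ> el (opsmult (-1) (Xop j)) 0 1 n
     = el (opsmult (c - 1) (eI F \<circ> (Xop j))) 0 1 n"
  apply (rule ext, rule ext)
  using assms
  apply (simp add: Dop_def el_def opadd_def opsmult_def Est_cf Xop_def Yop_def eI_cf dm_upd_j dm_upd_n dm_upd_n0)
  apply (auto simp: dm_def field_simps)
  done

lemma conj10Y:
  fixes c :: "'k::field"
  assumes "c \<noteq> 0" "j \<notin> F" "n \<notin> F" "j \<noteq> n" "finite F"
  shows "Dop F n c \<circ> el (opsmult (-1) (Yop j)) 1 0 n \<circ> Dop F n (inverse c) \<circ> el (opsmult (-1) (opsmult (-1) (Yop j))) 1 0 n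
     = el (opsmult (inverse c - 1) (eI F \<circ> (opsmult (-1) (Yop j)))) 1 0 n"
  apply (rule ext, rule ext)
  using assms
  apply (simp add: Dop_def el_def opadd_def opsmult_def Est_cf Xop_def Yop_def eI_cf dm_upd_j dm_upd_n dm_upd_n0)
  apply (auto simp: dm_def field_simps)
  done

lemma conj01m:
  fixes c :: "'k::field"
  assumes "c \<noteq> 0" "j \<notin> F" "n \<notin> F" "j \<noteq> n" "finite F"
  shows "Dop F n c \<circ> el (opsmult (-1) id) 0 1 n \<circ> Dop F n (inverse c) \<circ> el (opsmult (-1) (opsmult (-1) id)) 0 1 n
     = el (opsmult (c - 1) (eI F \<circ> (opsmult (-1) id))) 0 1 n"
  apply (rule ext, rule ext)
  using assms
  apply (simp add: Dop_def el_def opadd_def opsmult_def Est_cf Xop_def Yop_def eI_cf dm_upd_j dm_upd_n dm_upd_n0)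
  apply (auto simp: dm_def field_simps)
  done

lemma conj10i:
  fixes c :: "'k::field"
  assumes "c \<noteq> 0" "j \<notin> F" "n \<notin> F" "j \<noteq> n" "finite F"
  shows "Dop F n c \<circ> el (id) 1 0 n \<circ> Dop F n (inverse c) \<circ> el (opsmult (-1) (id)) 1 0 n
     = el (opsmult (inverse c - 1) (eI F \<circ> (id))) 1 0 n"
  apply (rule ext, rule ext)
  using assms
  apply (simp add: Dop_def el_def opadd_def opsmult_def Est_cf Xop_def Yop_def eI_cf dm_upd_j dm_upd_n dm_upd_n0)
  apply (auto simp: dm_def field_simps)
  done

definition Pm :: "nat \<Rightarrow> nat \<Rightarrow> 'k::field op" where
  "Pm j n = el (Xop j) 0 1 n \<circ> el (opsmult (-1) (Yop j)) 1 0 n \<circ> el (Xop j) 0 1 n \<circ>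
            el (opsmult (-1) id) 0 1 n \<circ> el id 1 0 n \<circ> el (opsmult (-1) id) 0 1 n"

lemma Pm_cf: "j \<noteq> n \<Longrightarrow> (Pm j n :: 'k::field op) v = (\<lambda>m. if m n = 0 then Xop j v m - (if m j = 0 then v (m(n := 1)) else 0)
    else if m n = 1 then v (m(j := m j + 1)) else v m)"
  apply (rule ext)
  apply (simp add: Pm_def el_def opadd_def opsmult_def Est_cf Xop_def Yop_def)
  apply (auto simp: fun_upd_twist fun_upd_idem)
  done

lemma muI_cf: "finite I \<Longrightarrow> (muI I c :: 'k::field op) v = (\<lambda>m. (if \<forall>k\<in>I. m k = 0 then c else 1) * v m)"
  by (rule ext) (simp add: muI_def opadd_def opsmult_def opsub_def eI_cf)

lemma mu_P:
  fixes c :: "'k::field"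
  assumes "c \<noteq> 0" "j \<notin> F" "n \<notin> F" "j \<noteq> n" "finite F"
  shows "muI (insert j (insert n F)) c \<circ> Pm j n = Dop F n c \<circ> Pm j n \<circ> Dop F n (inverse c)"
  apply (rule ext, rule ext)
  using assms
  apply (simp add: muI_cf Pm_cf Dop_def Xop_def dm_upd_j dm_upd_n dm_upd_n0)
  apply (auto simp: dm_def field_simps)
  done

lemma foldr_Einf: "\<forall>h\<in>set L. h \<in> Einf n \<Longrightarrow> foldr (\<circ>) L id \<in> Einf n"
  by (induction L) (auto intro: Einf_id Einf_comp)

definition cmt :: "('a \<Rightarrow> 'a) \<Rightarrow> ('a \<Rightarrow> 'a) \<Rightarrow> ('a \<Rightarrow> 'a)" where
  "cmt D X = D \<circ> X \<circ> inv D \<circ> inv X"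

lemma comm_chain:
  fixes L :: "'k::field op list"
  shows "bij D \<Longrightarrow> p \<subseteq> Sn (n-1) \<Longrightarrow> 0 < n \<Longrightarrow>
     \<forall>h\<in>set L. h \<in> Einf n \<and> cmt D h \<in> Einf_rel n p \<Longrightarrow>
     cmt D (foldr (\<circ>) L id) \<in> Einf_rel n p"
proof (induction L)
  case Nil
  have "D \<circ> inv D = id" using Nil surj_iff bij_is_surj by blast
  then show ?case unfolding cmt_def by (metis rel_id comp_id foldr.simps(1) id_apply inv_id)
next
  case (Cons a L)
  note Dh = Cons.prems(1) and ph = Cons.prems(2) and nh = Cons.prems(3)
  let ?Q = "foldr (\<circ>) L id"
  have aE: "a \<in> Einf n" and ca: "cmt D a \<in> Einf_rel n p" using Cons.prems(4) by auto
  have L4: "\<forall>h\<in>set L. h \<in> Einf n \<and> cmt D h \<in> Einf_rel n p" using Cons.prems(4) by simp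
  have IH: "cmt D ?Q \<in> Einf_rel n p" by (rule Cons.IH[OF Dh ph nh L4])
  have QE: "?Q \<in> Einf n"
    using Cons.prems(4) by (intro foldr_Einf) auto
  have ba: "bij a" by (rule Einf_bij[OF aE nh])
  have bQ: "bij ?Q" by (rule Einf_bij[OF QE nh])
  have eq: "cmt D (a \<circ> ?Q) = cmt D a \<circ> (a \<circ> cmt D ?Q \<circ> inv a)"
    using ba bQ Dh unfolding cmt_def o_inv_distrib[OF ba bQ] by (simp add: comp_def bij_is_inj inv_f_f)
  have "a \<circ> cmt D ?Q \<circ> inv a \<in> Einf_rel n p"
    by (rule rel_conj[OF IH aE ph nh])
  then have r: "cmt D a \<circ> (a \<circ> cmt D ?Q \<circ> inv a) \<in> Einf_rel n p" by (rule rel_comp[OF ca])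
  have e: "foldr (\<circ>) (a # L) id = a \<circ> ?Q" by simp
  show ?case unfolding e eq by (rule r)
qed

lemma Dop_inv:
  fixes c :: "'k::field"
  assumes "c \<noteq> 0"
  shows "Dop F n c \<circ> Dop F n (inverse c) = id" "Dop F n (inverse c) \<circ> Dop F n c = id"
  using assms by (auto simp: fun_eq_iff Dop_def dm_def)

lemma part2:
  fixes c :: "'k::field"
  assumes n: "0 < n" and S: "S \<subseteq> {1..n-1}" and I: "I \<subseteq> {1..n}" "n \<in> I"
    and i0: "i0 \<in> I" "i0 \<in> S" and c: "c \<noteq> 0" and j: "j \<in> I" "j \<noteq> n" "j \<noteq> i0"
  shows "muI I c \<in> Einf_rel n (pS n S)"
proof -
  define F where "F = I - {j, n}"
  have fI: "finite I" using I finite_subset by blast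
  have fF: "finite F" using fI by (simp add: F_def)
  have IF: "I = insert j (insert n F)" using I j by (auto simp: F_def)
  have jF: "j \<notin> F" "n \<notin> F" by (auto simp: F_def)
  have i0F: "i0 \<in> F" using i0 j S n by (auto simp: F_def)
  have Fsub: "F \<subseteq> {1..n-1}" using I by (auto simp: F_def)
  have "j \<le> n" "1 \<le> j" using I j by auto
  then have jT: "j \<in> {1..n-1}" using j by auto
  have p: "pS n S \<subseteq> Sn (n-1)" by (rule pS_sub[OF S])
  let ?D = "Dop F n c"
  have bD: "bij ?D" using Dop_inv[OF c] o_bij by metis
  have iD: "inv ?D = Dop F n (inverse c)" using Dop_inv[OF c] inv_unique_comp by metis
  have XS: "Xop j \<in> Sn (n-1)" unfolding Sn_def by (rule X_SS[OF jT])
  have YS: "opsmult (-1) (Yop j) \<in> Sn (n-1)" unfolding Sn_def by (rule smult_SS[OF Y_SS[OF jT]])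
  have mS: "opsmult (-1) id \<in> Sn (n-1)" unfolding Sn_def by (rule smult_SS[OF id_SS])
  have iS: "id \<in> Sn (n-1)" unfolding Sn_def by (rule id_SS)
  have coef: "opsmult \<mu> (eI F \<circ> r) \<in> pS n S" if "r \<in> Sn (n-1)" for \<mu> r
    using pS_EabI[OF fF i0F i0(2) Fsub iS that, of \<mu> "\<lambda>_. 0" "\<lambda>_. 0"]
    by (simp add: eI_EabI)
  have gen: "el r k l n \<in> Einf n \<and> cmt ?D (el r k l n) \<in> Einf_rel n (pS n S)"
    if r: "r \<in> Sn (n-1)" and kl: "k \<noteq> l"
      and cj: "?D \<circ> el r k l n \<circ> Dop F n (inverse c) \<circ> el (opsmult (-1) r) k l n
         = el (opsmult \<mu> (eI F \<circ> r)) k l n" for r k l \<mu>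
  proof
    show "el r k l n \<in> Einf n" unfolding el_def by (rule Egen_in[OF r kl])
    have "inv (el r k l n) = el (opsmult (-1) r) k l n"
      unfolding el_def by (rule Egen_invE[OF r kl n])
    then show "cmt ?D (el r k l n) \<in> Einf_rel n (pS n S)"
      unfolding iD cmt_def using cj rel_gen0[OF coef[OF r] kl] by (simp add: el_def)
  qed
  let ?hs = "[el (Xop j) 0 1 n :: 'k op, el (opsmult (-1) (Yop j)) 1 0 n, el (Xop j) 0 1 n,
            el (opsmult (-1) id) 0 1 n, el id 1 0 n, el (opsmult (-1) id) 0 1 n]"
  have hs: "\<forall>h\<in>set ?hs. h \<in> Einf n \<and> cmt ?D h \<in> Einf_rel n (pS n S)"
    using gen[OF XS _ conj01X[OF c jF j(2) fF]]
          gen[OF YS _ conj10Y[OF c jF j(2) fF]]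
          gen[OF mS _ conj01m[OF c jF j(2) fF]]
          gen[OF iS _ conj10i[OF c jF j(2) fF]]
    by auto
  have Pf: "Pm j n = foldr (\<circ>) ?hs id" by (simp add: Pm_def comp_assoc)
  have cP: "cmt ?D (Pm j n) \<in> Einf_rel n (pS n S)"
    unfolding Pf by (rule comm_chain[OF bD p n hs])
  have bP: "bij (Pm j n :: 'k op)" unfolding Pf
    using hs by (intro Einf_bij[OF _ n] foldr_Einf) auto
  have "muI I c = muI I c \<circ> Pm j n \<circ> inv (Pm j n)"
    using bP by (metis bij_is_surj comp_assoc comp_id surj_iff)
  also have "\<dots> = ?D \<circ> Pm j n \<circ> inv ?D \<circ> inv (Pm j n)"
    unfolding IF mu_P[OF c jF j(2) fF] iD ..
  finally show ?thesis using cP by (simp add: cmt_def)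
qed

lemma foldr_map_rel:
  "\<forall>I\<in>set L. g I \<in> Einf_rel n p \<Longrightarrow> foldr (\<circ>) (map g L) id \<in> Einf_rel n p"
  by (induction L) (auto intro: rel_id rel_comp)

theorem lemma5p4:
  fixes n :: nat and S :: "nat set"
  assumes "n \<ge> 3" and "S \<noteq> {}" and "S \<subseteq> {1..n-1}"
  shows "(\<forall>I\<in>JJ n S. 2 \<le> card I \<and> card I \<le> n - 1 \<longrightarrow>
            (Einf_C n I :: 'k::field op set) \<subseteq> Einf_rel n (pS n S))
       \<and> (\<forall>I\<in>JJ n S. 3 \<le> card I \<and> card I \<le> n - 1 \<longrightarrow>
            (U_I I :: 'k::field op set) \<subseteq> Einf_rel n (pS n S))
       \<and> (\<forall>s. 3 \<le> s \<and> s \<le> n - 1 \<longrightarrow>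
            (Etilde n S s :: 'k::field op set) \<subseteq> Einf_rel n (pS n S))"
proof -
  have n: "0 < n" using assms(1) by simp
  note S = assms(3)
  have P1: "(Einf_C n I :: 'k::field op set) \<subseteq> Einf_rel n (pS n S)" if "I \<in> JJ n S" for I
  proof -
    from that obtain i0 where I: "I \<subseteq> {1..n}" "n \<in> I" "i0 \<in> I" "i0 \<in> S"
      unfolding JJ_def by blast
    show ?thesis by (rule part1[OF n S I])
  qed
  have P2: "(U_I I :: 'k::field op set) \<subseteq> Einf_rel n (pS n S)" if "I \<in> JJ n S" "3 \<le> card I" for I
  proof
    fix x :: "'k op" assume x: "x \<in> U_I I"
    from that obtain i0 where I: "I \<subseteq> {1..n}" "n \<in> I" "i0 \<in> I" "i0 \<in> S"
      unfolding JJ_def by blast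
    have fI: "finite I" using I finite_subset by blast
    have "\<not> I \<subseteq> {n, i0}"
    proof
      assume "I \<subseteq> {n, i0}"
      then have "card I \<le> card {n, i0}" by (rule card_mono[rotated]) simp
      also have "\<dots> \<le> 2" by (simp add: card_insert_if)
      finally show False using that(2) by simp
    qed
    then obtain j where j: "j \<in> I" "j \<noteq> n" "j \<noteq> i0" by blast
    from x obtain c where c: "c \<noteq> 0" "x = muI I c" unfolding U_I_def by blast
    show "x \<in> Einf_rel n (pS n S)" unfolding c(2) by (rule part2[OF n S I c(1) j])
  qed
  have P3: "(Etilde n S s :: 'k::field op set) \<subseteq> Einf_rel n (pS n S)" if "3 \<le> s" "s \<le> n - 1" for s
  proof
    fix x :: "'k op" assume "x \<in> Etilde n S s"
    then obtain L g where x: "x = foldr (\<circ>) (map g L) id"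
      and L: "set L = {I \<in> JJ n S. card I = s}"
      and g: "\<forall>I\<in>set L. \<exists>u\<in>U_I I. \<exists>h\<in>Einf_C n I. g I = u \<circ> h"
      unfolding Etilde_def by blast
    have "\<forall>I\<in>set L. g I \<in> Einf_rel n (pS n S)"
    proof
      fix I assume I: "I \<in> set L"
      then obtain u h where u: "u \<in> U_I I" and h: "h \<in> Einf_C n I" and gI: "g I = u \<circ> h" using g by blast
      have IJ: "I \<in> JJ n S" "card I = s" using I L by auto
      have "u \<in> Einf_rel n (pS n S)" using P2[OF IJ(1)] IJ(2) that u by auto
      moreover have "h \<in> Einf_rel n (pS n S)" using P1[OF IJ(1)] h by auto
      ultimately show "g I \<in> Einf_rel n (pS n S)" unfolding gI by (rule rel_comp)
    qed
    then show "x \<in> Einf_rel n (pS n S)" unfolding x by (rule foldr_map_rel)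
  qed
  show ?thesis using P1 P2 P3 by blast
qed

end
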